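(* Consider the discrete setting described in the context, with constants $0<\gamma_1<\rho_\infty^*$ and $\gamma_2>0$. Given any $(\mathfrak f^n_{ij},\mathfrak g^n_{ij})_{i\in\mathcal I,j\in\mathcal J}$ (real numbers), the truncated scheme $$\frac{\mathfrak f^{n+1}_{ij}-\mathfrak f^n_{ij}}{\Delta t}+\frac{1}{\Delta x\Delta v}\big(\mathcal F^{n+1}_{i+\frac12,j}-\mathcal F^{n+1}_{i-\frac12,j}\big)=\chi_{1,j}-\tilde\rho^{n+1}_{\mathfrak g,i}\tilde{\mathfrak f}^{n+1}_{ij},$$ $$\frac{\mathfrak g^{n+1}_{ij}-\mathfrak g^n_{ij}}{\Delta t}+\frac{1}{\Delta x\Delta v}\big(\mathcal G^{n+1}_{i+\frac12,j}-\mathcal G^{n+1}_{i-\frac12,j}\big)=\chi_{2,j}-\tilde\rho^{n+1}_{\mathfrak f,i}\tilde{\mathfrak g}^{n+1}_{ij}$$ ($i\in\mathcal I$, $j\in\mathcal J$) admits at least one solution $(\mathfrak f^{n+1}_{ij},\mathfrak g^{n+1}_{ij})_{i\in\mathcal I,j\in\mathcal J}$.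
   Context: Space mesh: $N$ uniform cells of length $\Delta x$, $i\in\mathcal I=\mathbb Z/N\mathbb Z$ (periodic). Velocity mesh: $\Delta v=v^*/L$, $j\in\mathcal J=\{-L+1,\dots,L\}$, $v_j=(j-\tfrac12)\Delta v$. Time step $\Delta t>0$; $\lambda=\Delta x/(2\Delta t)$. $\rho_\infty^*>0$ a given constant. For $k=1,2$: $\chi_{k,j}>0$, $\chi_{k,j}=\chi_{k,1-j}$, $\sum_j\Delta v\chi_{k,j}=1$. Fluxes: $\mathcal F^{n+1}_{i+\frac12,j}=\Delta v\frac{v_j}{2}(\mathfrak f^{n+1}_{i+1,j}+\mathfrak f^{n+1}_{ij})-\Delta v\lambda(\mathfrak f^{n+1}_{i+1,j}-\mathfrak f^{n+1}_{ij})$, $\mathcal G$ likewise with $\mathfrak g$. Truncations: $\tilde{\mathfrak f}_{ij}=\min\big(\max(\mathfrak f_{ij},(\rho_\infty^*-\gamma_1)\chi_{1,j}),(\rho_\infty^*+\gamma_2)\chi_{1,j}\big)$ and $\tilde{\mathfrak g}_{ij}=\min\big(\max(\mathfrak g_{ij},(\rho_\infty^*+\gamma_2)^{-1}\chi_{2,j}),(\rho_\infty^*-\gamma_1)^{-1}\chi_{2,j}\big)$; truncated densities $\tilde\rho_{\mathfrak f,i}=\sum_j\Delta v\,\tilde{\mathfrak f}_{ij}$, $\tilde\rho_{\mathfrak g,i}=\sum_j\Delta v\,\tilde{\mathfrak g}_{ij}$ (all evaluated at level $n+1$ in the scheme). *)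

theory Defs
  imports "HOL-Analysis.Analysis"
begin

text \<open>Discrete setting. Space cells i in {0..<N} (periodic, indices taken mod N),
velocity indices j in {-L+1..L}, v_j = (j - 1/2) dv, dv = vstar / L,
lambda = dx / (2 dt).\<close>

definition vel_idx :: "nat \<Rightarrow> int set" where
  "vel_idx L = {- int L + 1 .. int L}"

definition dvel :: "real \<Rightarrow> nat \<Rightarrow> real" where
  "dvel vstar L = vstar / real L"

definition vnode :: "real \<Rightarrow> nat \<Rightarrow> int \<Rightarrow> real" where
  "vnode vstar L j = (real_of_int j - 1/2) * dvel vstar L"

text \<open>Numerical flux at interface i+1/2 (i+1 taken mod N).\<close>
definition flux :: "nat \<Rightarrow> real \<Rightarrow> nat \<Rightarrow> real \<Rightarrow> real \<Rightarrow> (nat \<Rightarrow> int \<Rightarrow> real) \<Rightarrow> nat \<Rightarrow> int \<Rightarrow> real" where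
  "flux N vstar L dx dt h i j =
     dvel vstar L * (vnode vstar L j / 2) * (h ((i + 1) mod N) j + h i j)
     - dvel vstar L * (dx / (2 * dt)) * (h ((i + 1) mod N) j - h i j)"

definition trunc_f :: "real \<Rightarrow> real \<Rightarrow> real \<Rightarrow> (int \<Rightarrow> real) \<Rightarrow> (nat \<Rightarrow> int \<Rightarrow> real) \<Rightarrow> nat \<Rightarrow> int \<Rightarrow> real" where
  "trunc_f rho g1 g2 chi1 f i j =
     min (max (f i j) ((rho - g1) * chi1 j)) ((rho + g2) * chi1 j)"

definition trunc_g :: "real \<Rightarrow> real \<Rightarrow> real \<Rightarrow> (int \<Rightarrow> real) \<Rightarrow> (nat \<Rightarrow> int \<Rightarrow> real) \<Rightarrow> nat \<Rightarrow> int \<Rightarrow> real" where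
  "trunc_g rho g1 g2 chi2 g i j =
     min (max (g i j) (inverse (rho + g2) * chi2 j)) (inverse (rho - g1) * chi2 j)"

definition trunc_dens :: "real \<Rightarrow> nat \<Rightarrow> (nat \<Rightarrow> int \<Rightarrow> real) \<Rightarrow> nat \<Rightarrow> real" where
  "trunc_dens vstar L ht i = (\<Sum>j\<in>vel_idx L. dvel vstar L * ht i j)"

end

theory Submission
  imports Defs "HOL-Homology.Homology"
begin


lemma brouwer_acute_nat:
  fixes \<Phi> :: "(nat \<Rightarrow> real) \<Rightarrow> nat \<Rightarrow> real" and m :: nat and R :: real
  assumes cont: "continuous_on UNIV \<Phi>"
    and out: "\<And>x k. m < k \<Longrightarrow> \<Phi> x k = 0"
    and R: "R > 0"
    and acute: "\<And>x. (\<forall>i>m. x i = 0) \<Longrightarrow> (\<Sum>i\<le>m. (x i)^2) = R^2 \<Longrightarrow> (\<Sum>i\<le>m. \<Phi> x i * x i) > 0"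
  shows "\<exists>x. \<forall>k. \<Phi> x k = 0"
proof (rule ccontr)
  assume "\<not> ?thesis"
  then have nzero: "\<And>x. \<exists>k\<le>m. \<Phi> x k \<noteq> 0" using out by (meson not_le)
  define nrm where "nrm y = (\<Sum>i\<le>m. (y i)^2)" for y :: "nat \<Rightarrow> real"
  define nz where "nz y = (\<lambda>i. y i / sqrt (nrm y))" for y :: "nat \<Rightarrow> real"
  define Sph where "Sph = {x::nat\<Rightarrow>real. nrm x = 1 \<and> (\<forall>i>m. x i = 0)}"
  define E where "E = {x::nat\<Rightarrow>real. \<forall>i\<ge>Suc m. x i = 0}"
  have nsph: "nsphere m = top_of_set Sph"
    unfolding nsphere Sph_def nrm_def euclidean_product_topology ..
  have eucl: "Euclidean_space (Suc m) = top_of_set E"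
    unfolding Euclidean_space_def E_def euclidean_product_topology ..
  have nrm_pos: "nrm y > 0" if "\<exists>k\<le>m. y k \<noteq> 0" for y
  proof -
    from that obtain k where k: "k \<le> m" "y k \<noteq> 0" by blast
    have "0 < (y k)^2" using k by simp
    also have "\<dots> \<le> nrm y" unfolding nrm_def
      by (rule member_le_sum) (use k in auto)
    finally show ?thesis .
  qed
  have nz_in: "nz y \<in> Sph" if "nrm y > 0" "\<forall>i>m. y i = 0" for y
  proof -
    have "nrm (nz y) = (\<Sum>i\<le>m. (y i)^2 / nrm y)"
      unfolding nrm_def nz_def using that(1) by (simp add: power_divide nrm_def)
    also have "\<dots> = 1" using that(1) by (simp add: sum_divide_distrib[symmetric] nrm_def)
    finally show ?thesis using that unfolding Sph_def nz_def by auto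
  qed
  have nz_id: "nz y = y" if "y \<in> Sph" for y
    using that unfolding Sph_def nz_def by auto
  have cont_nrm: "continuous_on A (\<lambda>z. nrm (g z))" if "\<And>i. continuous_on A (\<lambda>z. g z i)" for A and g :: "'a::topological_space \<Rightarrow> nat \<Rightarrow> real"
    unfolding nrm_def by (intro continuous_intros that)
  have cont_nz: "continuous_on A (\<lambda>z. nz (g z))" if "\<And>i. continuous_on A (\<lambda>z. g z i)" 
     "\<And>z. z \<in> A \<Longrightarrow> nrm (g z) > 0" for A and g :: "'a::topological_space \<Rightarrow> nat \<Rightarrow> real"
    unfolding nz_def
    by (intro continuous_on_coordinatewise_then_product continuous_intros that cont_nrm) (use that(2) in fastforce)
  have contPhi: "continuous_on A (\<lambda>z. \<Phi> (g z) i)" if "continuous_on A g" for A i and g :: "'a::topological_space \<Rightarrow> nat \<Rightarrow> real"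
    by (rule continuous_on_product_then_coordinatewise, rule continuous_on_compose2[OF cont that]) auto
  have contc: "continuous_on A (\<lambda>z. g z i)" if "continuous_on A g" for A i and g :: "'a::topological_space \<Rightarrow> nat \<Rightarrow> real"
    using continuous_on_product_then_coordinatewise[OF that] .
  define f where "f y = nz (\<Phi> (\<lambda>i. R * y i))" for y
  have contscale: "continuous_on A (\<lambda>y::nat\<Rightarrow>real. (\<lambda>i. R * y i))" for A
    by (intro continuous_on_coordinatewise_then_product continuous_intros continuous_on_subset[OF continuous_on_product_coordinates]) auto
  have contf: "continuous_on UNIV f"
    unfolding f_def
    by (intro cont_nz contPhi contscale nrm_pos nzero)
  have f_in: "f y \<in> Sph" for y
    unfolding f_def by (intro nz_in nrm_pos nzero) (simp add: out)
  have cf: "continuous_map (Euclidean_space (Suc m)) (nsphere m) f"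
    unfolding eucl nsph using f_in by (auto intro: continuous_on_subset[OF contf])
  have cg: "continuous_map (nsphere m) (Euclidean_space (Suc m)) id"
    unfolding eucl nsph by (auto simp: Sph_def E_def)
  define H where "H z = nz (\<lambda>i. (1 - fst z) * snd z i + fst z * \<Phi> (\<lambda>i. R * snd z i) i)" for z :: "real \<times> (nat \<Rightarrow> real)"
  have Hpos: "nrm (\<lambda>i. (1 - t) * y i + t * \<Phi> (\<lambda>i. R * y i) i) > 0" if "t \<in> {0..1}" "y \<in> Sph" for t y
  proof (rule nrm_pos, rule ccontr)
    assume "\<not> (\<exists>k\<le>m. (1 - t) * y k + t * \<Phi> (\<lambda>i. R * y i) k \<noteq> 0)"
    then have w0: "\<And>k. k \<le> m \<Longrightarrow> (1 - t) * y k + t * \<Phi> (\<lambda>i. R * y i) k = 0" by auto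
    have y1: "(\<Sum>i\<le>m. (y i)^2) = 1" and y0: "\<forall>i>m. y i = 0" using that(2) by (auto simp: Sph_def nrm_def)
    have "(\<Sum>i\<le>m. (R * y i)^2) = R^2 * (\<Sum>i\<le>m. (y i)^2)"
      by (simp add: power_mult_distrib sum_distrib_left)
    then have "(\<Sum>i\<le>m. \<Phi> (\<lambda>i. R * y i) i * (R * y i)) > 0"
      using y1 y0 by (intro acute) auto
    then have "R * (\<Sum>i\<le>m. \<Phi> (\<lambda>i. R * y i) i * y i) > 0"
      by (simp add: sum_distrib_left algebra_simps)
    then have p: "(\<Sum>i\<le>m. \<Phi> (\<lambda>i. R * y i) i * y i) > 0"
      using R by (simp add: zero_less_mult_iff)
    have "0 = (\<Sum>i\<le>m. ((1 - t) * y i + t * \<Phi> (\<lambda>i. R * y i) i) * y i)"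
      using w0 by simp
    also have "\<dots> = (\<Sum>i\<le>m. (1 - t) * (y i)^2 + t * (\<Phi> (\<lambda>i. R * y i) i * y i))"
      by (rule sum.cong) (auto simp: algebra_simps power2_eq_square)
    also have "\<dots> = (1 - t) * (\<Sum>i\<le>m. (y i)^2) + t * (\<Sum>i\<le>m. \<Phi> (\<lambda>i. R * y i) i * y i)"
      by (simp add: sum.distrib sum_distrib_left)
    also have "\<dots> = (1 - t) + t * (\<Sum>i\<le>m. \<Phi> (\<lambda>i. R * y i) i * y i)"
      using y1 by simp
    finally have eq: "0 = (1 - t) + t * (\<Sum>i\<le>m. \<Phi> (\<lambda>i. R * y i) i * y i)" .
    show False
    proof (cases "t = 0")
      case True then show False using eq by simp
    next
      case False
      then have "t > 0" using that(1) by auto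
      then have "t * (\<Sum>i\<le>m. \<Phi> (\<lambda>i. R * y i) i * y i) > 0" using p by simp
      then show False using eq that(1) by auto
    qed
  qed
  have Hin: "H z \<in> Sph" if "z \<in> {0..1} \<times> Sph" for z
    using that Hpos unfolding H_def by (intro nz_in) (auto simp: out Sph_def)
  have contH: "continuous_on ({0..1} \<times> Sph) H"
    unfolding H_def
  proof (rule cont_nz)
    fix i
    have c1: "continuous_on ({0..1} \<times> Sph) (\<lambda>z::real \<times> (nat \<Rightarrow> real). snd z i)"
      by (rule contc, intro continuous_intros)
    have c2: "continuous_on ({0..1} \<times> Sph) (\<lambda>z::real \<times> (nat \<Rightarrow> real). \<Phi> (\<lambda>i. R * snd z i) i)"
      by (rule contPhi, rule continuous_on_compose2[OF contscale continuous_on_snd[OF continuous_on_id]]) auto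
    show "continuous_on ({0..1} \<times> Sph) (\<lambda>z. (1 - fst z) * snd z i + fst z * \<Phi> (\<lambda>i. R * snd z i) i)"
      by (intro continuous_intros c1 c2)
  next
    fix z :: "real \<times> (nat \<Rightarrow> real)" assume "z \<in> {0..1} \<times> Sph"
    then show "nrm (\<lambda>i. (1 - fst z) * snd z i + fst z * \<Phi> (\<lambda>i. R * snd z i) i) > 0"
      using Hpos by (cases z) auto
  qed
  have hom1: "homotopic_with (\<lambda>x. True) (nsphere m) (nsphere m) nz f"
    unfolding homotopic_with_def
  proof (intro exI conjI allI ballI)
    show "continuous_map (prod_topology (top_of_set {0..1}) (nsphere m)) (nsphere m) H"
      unfolding nsph prod_topology_subtopology_eu using contH Hin by auto
  qed (auto simp: H_def f_def)
  have hom0: "homotopic_with (\<lambda>x. True) (nsphere m) (nsphere m) id nz"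
    by (rule homotopic_with_equal) (use cg nz_id in \<open>auto simp: nsph Sph_def\<close>)
  have "homotopic_with (\<lambda>x. True) (nsphere m) (nsphere m) (f \<circ> id) id"
    using homotopic_with_symD[OF homotopic_with_trans[OF hom0 hom1]] by simp
  then have "contractible_space (nsphere m)"
    by (rule homotopy_dominated_contractibility[OF cf cg _ contractible_Euclidean_space])
  then show False using non_contractible_space_nsphere by blast
qed

lemma brouwer_acute_fin:
  fixes \<Phi> :: "('a \<Rightarrow> real) \<Rightarrow> 'a \<Rightarrow> real" and S :: "'a set" and R :: real
  assumes fin: "finite S" and ne: "S \<noteq> {}" and cont: "continuous_on UNIV \<Phi>" and R: "R > 0"
    and acute: "\<And>x. (\<Sum>s\<in>S. (x s)^2) = R^2 \<Longrightarrow> (\<Sum>s\<in>S. \<Phi> x s * x s) > 0"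
  shows "\<exists>x. \<forall>s\<in>S. \<Phi> x s = 0"
proof -
  obtain e where e: "bij_betw e {0..<card S} S" using ex_bij_betw_nat_finite[OF fin] by blast
  define n where "n = card S"
  have n: "n > 0" using fin ne by (simp add: n_def card_gt_0_iff)
  define m where "m = n - 1"
  have ivl: "{..m} = {0..<n}" using n by (auto simp: m_def)
  define e' where "e' = inv_into {0..<n} e"
  have inj: "inj_on e {0..<n}" using e by (simp add: bij_betw_def n_def)
  have e'e: "e' (e i) = i" if "i < n" for i
    using inv_into_f_f[OF inj] that by (simp add: e'_def)
  define enc where "enc y = (\<lambda>s. y (e' s))" for y :: "nat \<Rightarrow> real"
  define \<Psi> where "\<Psi> y k = (if k \<le> m then \<Phi> (enc y) (e k) else 0)" for y k
  have contenc: "continuous_on UNIV enc"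
    unfolding enc_def by (intro continuous_on_coordinatewise_then_product continuous_on_product_coordinates)
  have cont\<Psi>: "continuous_on UNIV \<Psi>"
  proof (rule continuous_on_coordinatewise_then_product)
    fix k
    show "continuous_on UNIV (\<lambda>y. \<Psi> y k)"
    proof (cases "k \<le> m")
      case True
      have "continuous_on UNIV (\<lambda>y. \<Phi> (enc y) (e k))"
        by (rule continuous_on_product_then_coordinatewise, rule continuous_on_compose2[OF cont contenc]) auto
      then show ?thesis using True by (simp add: \<Psi>_def)
    qed (simp add: \<Psi>_def)
  qed
  have reidx: "(\<Sum>i\<le>m. h (e i)) = (\<Sum>s\<in>S. h s)" for h :: "'a \<Rightarrow> real"
    unfolding ivl using sum.reindex_bij_betw[OF e, of h] by (simp add: n_def)
  have "\<exists>y. \<forall>k. \<Psi> y k = 0"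
  proof (rule brouwer_acute_nat[OF cont\<Psi> _ R])
    show "\<And>x k. m < k \<Longrightarrow> \<Psi> x k = 0" by (simp add: \<Psi>_def)
  next
    fix y :: "nat \<Rightarrow> real"
    assume "\<forall>i>m. y i = 0" and y: "(\<Sum>i\<le>m. (y i)^2) = R^2"
    have ency: "enc y (e i) = y i" if "i \<le> m" for i
      using e'e[of i] that n by (simp add: enc_def m_def)
    have "(\<Sum>s\<in>S. (enc y s)^2) = (\<Sum>i\<le>m. (enc y (e i))^2)" by (rule reidx[symmetric])
    also have "\<dots> = R^2" using y ency by simp
    finally have "(\<Sum>s\<in>S. \<Phi> (enc y) s * enc y s) > 0" by (rule acute)
    also have "(\<Sum>s\<in>S. \<Phi> (enc y) s * enc y s) = (\<Sum>i\<le>m. \<Phi> (enc y) (e i) * enc y (e i))"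
      by (rule reidx[symmetric])
    also have "\<dots> = (\<Sum>i\<le>m. \<Psi> y i * y i)"
      by (rule sum.cong) (auto simp: \<Psi>_def ency)
    finally show "(\<Sum>i\<le>m. \<Psi> y i * y i) > 0" .
  qed
  then obtain y where y: "\<And>k. \<Psi> y k = 0" by blast
  show ?thesis
  proof (intro exI ballI)
    fix s assume "s \<in> S"
    then obtain k where k: "k < n" "s = e k" using e by (force simp: bij_betw_def n_def)
    then show "\<Phi> (enc y) s = 0" using y[of k] by (auto simp: \<Psi>_def m_def split: if_splits)
  qed
qed



lemma bij_shift_mod:
  fixes N k :: nat assumes "N > 0"
  shows "bij_betw (\<lambda>i. (i + k) mod N) {..<N} {..<N}"
proof -
  have inj: "inj_on (\<lambda>i. (i + k) mod N) {..<N}"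
  proof (rule inj_onI)
    fix a b assume "a \<in> {..<N}" "b \<in> {..<N}" "(a + k) mod N = (b + k) mod N"
    then have ab: "a < N" "b < N" "(a + k) mod N = (b + k) mod N" by auto
    show "a = b"
    proof (cases "b \<le> a")
      case True
      then have "N dvd (a + k) - (b + k)" using ab(3) mod_eq_dvd_iff_nat[of "b+k" "a+k" N] by auto
      then have "N dvd a - b" by simp
      moreover have "a - b < N" using ab by auto
      ultimately show ?thesis using True by (metis diff_is_0_eq dvd_imp_le le_antisym not_le zero_less_diff)
    next
      case False
      then have "N dvd (b + k) - (a + k)" using ab(3) mod_eq_dvd_iff_nat[of "a+k" "b+k" N] by auto
      then have "N dvd b - a" by simp
      moreover have "b - a < N" using ab by auto
      ultimately show ?thesis using False by (metis diff_is_0_eq dvd_imp_le not_le zero_less_diff)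
    qed
  qed
  moreover have "(\<lambda>i. (i + k) mod N) ` {..<N} \<subseteq> {..<N}" using assms by auto
  ultimately show ?thesis
    by (simp add: bij_betw_def endo_inj_surj)
qed

lemma trunc_abs: "\<bar>min (max (a::real) lo) hi\<bar> \<le> \<bar>lo\<bar> + \<bar>hi\<bar>"
  by (simp add: min_def max_def abs_if)

lemma pointwise_bound:
  fixes a a0 c r tr K B dt :: real
  assumes "dt > 0" "\<bar>r\<bar> \<le> K" "\<bar>tr\<bar> \<le> B"
  shows "((a - a0) / dt - (c - r * tr)) * a \<ge> a^2 / dt - (\<bar>a0\<bar> / dt + \<bar>c\<bar> + K * B) * \<bar>a\<bar>"
proof -
  have 1: "a0 / dt * a \<le> \<bar>a0\<bar> / dt * \<bar>a\<bar>" using assms(1)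
    by (metis abs_divide abs_ge_self abs_mult abs_of_pos)
  have 2: "c * a \<le> \<bar>c\<bar> * \<bar>a\<bar>" by (metis abs_ge_self abs_mult)
  have 3: "- (r * tr * a) \<le> K * B * \<bar>a\<bar>"
  proof -
    have "- (r * tr * a) \<le> \<bar>r\<bar> * \<bar>tr\<bar> * \<bar>a\<bar>" by (metis abs_ge_minus_self abs_mult)
    also have "\<dots> \<le> K * B * \<bar>a\<bar>" using assms
      by (intro mult_right_mono mult_mono) auto
    finally show ?thesis .
  qed
  have "((a - a0) / dt - (c - r * tr)) * a = a^2/dt - a0 / dt * a - c * a + r * tr * a"
    using assms(1) by (simp add: field_simps power2_eq_square)
  then show ?thesis using 1 2 3 by (simp add: algebra_simps)
qed

lemma transport_nonneg:
  fixes h :: "nat \<Rightarrow> int \<Rightarrow> real"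
  assumes N: "N \<ge> 1" and dx: "dx > 0" and dt: "dt > 0" and dv: "dvel vstar L > 0"
  shows "(\<Sum>i<N. (flux N vstar L dx dt h i j - flux N vstar L dx dt h ((i + N - 1) mod N) j)
            / (dx * dvel vstar L) * h i j) \<ge> 0"
proof -
  define nx where "nx i = (i + 1) mod N" for i
  define pv where "pv i = (i + (N - 1)) mod N" for i
  define F where "F i = flux N vstar L dx dt h i j" for i
  define v where "v = vnode vstar L j"
  define dv where "dv = dvel vstar L"
  define lam where "lam = dx / (2 * dt)"
  have pv': "(i + N - 1) mod N = pv i" for i using N by (simp add: pv_def)
  have nxpv: "nx (pv i) = i" if "i < N" for i
  proof -
    have "nx (pv i) = ((i + (N - 1)) mod N + 1) mod N" by (simp add: nx_def pv_def)
    also have "\<dots> = (i + (N - 1) + 1) mod N" by (simp add: mod_Suc_eq)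
    also have "\<dots> = (i + N) mod N" using N by simp
    also have "\<dots> = i" using that by simp
    finally show ?thesis .
  qed
  have bnx: "bij_betw nx {..<N} {..<N}" unfolding nx_def using N by (intro bij_shift_mod) auto
  have bpv: "bij_betw pv {..<N} {..<N}" unfolding pv_def using N by (intro bij_shift_mod) auto
  have Fdef: "F i = dv * (v / 2) * (h (nx i) j + h i j) - dv * lam * (h (nx i) j - h i j)" for i
    by (simp add: F_def flux_def nx_def v_def dv_def lam_def)
  have s1: "(\<Sum>i<N. F (pv i) * h i j) = (\<Sum>i<N. F i * h (nx i) j)"
  proof -
    have "(\<Sum>i<N. F (pv i) * h i j) = (\<Sum>i<N. F (pv i) * h (nx (pv i)) j)"
      by (rule sum.cong) (auto simp: nxpv)
    also have "\<dots> = (\<Sum>i<N. F i * h (nx i) j)"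
      using sum.reindex_bij_betw[OF bpv, of "\<lambda>k. F k * h (nx k) j"] by simp
    finally show ?thesis .
  qed
  have s2: "(\<Sum>i<N. (h (nx i) j)^2) = (\<Sum>i<N. (h i j)^2)"
    using sum.reindex_bij_betw[OF bnx, of "\<lambda>k. (h k j)^2"] by simp
  have "(\<Sum>i<N. (F i - F (pv i)) * h i j) = (\<Sum>i<N. F i * h i j) - (\<Sum>i<N. F i * h (nx i) j)"
    by (simp add: algebra_simps sum_subtractf s1)
  also have "\<dots> = (\<Sum>i<N. F i * (h i j - h (nx i) j))"
    by (simp add: algebra_simps sum_subtractf)
  also have "\<dots> = (\<Sum>i<N. dv * (v/2) * ((h i j)^2 - (h (nx i) j)^2) + dv * lam * (h (nx i) j - h i j)^2)"
    by (rule sum.cong) (auto simp: Fdef field_simps power2_eq_square)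
  also have "\<dots> = dv * (v/2) * ((\<Sum>i<N. (h i j)^2) - (\<Sum>i<N. (h (nx i) j)^2)) + dv * lam * (\<Sum>i<N. (h (nx i) j - h i j)^2)"
    by (simp only: sum.distrib sum_distrib_left[symmetric] sum_subtractf)
  also have "\<dots> = dv * lam * (\<Sum>i<N. (h (nx i) j - h i j)^2)"
    using s2 by simp
  finally have eq: "(\<Sum>i<N. (F i - F (pv i)) * h i j) = dv * lam * (\<Sum>i<N. (h (nx i) j - h i j)^2)" .
  have "dv * lam * (\<Sum>i<N. (h (nx i) j - h i j)^2) \<ge> 0"
    using dv dx dt unfolding dv_def lam_def
    by (intro mult_nonneg_nonneg sum_nonneg divide_nonneg_pos) auto
  then have "(\<Sum>i<N. (F i - F (pv i)) * h i j) / (dx * dv) \<ge> 0"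
    unfolding eq using dx dv by (intro divide_nonneg_pos) (auto simp: dv_def)
  moreover have "(\<Sum>i<N. (F i - F (pv i)) * h i j) / (dx * dv) = 
     (\<Sum>i<N. (F i - F (pv i)) / (dx * dv) * h i j)"
    by (simp add: sum_divide_distrib)
  ultimately have "0 \<le> (\<Sum>i<N. (F i - F (pv i)) / (dx * dv) * h i j)" by simp
  then show ?thesis unfolding pv' by (simp add: F_def dv_def)
qed



theorem lemma5p3:
  fixes N L :: nat and vstar dx dt rho g1 g2 :: real
    and chi1 chi2 :: "int \<Rightarrow> real"
    and fn gn :: "nat \<Rightarrow> int \<Rightarrow> real"
  assumes "N \<ge> 1" and "L \<ge> 1" and "vstar > 0" and "dx > 0" and "dt > 0"
    and "rho > 0" and "0 < g1" and "g1 < rho" and "g2 > 0"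
    and "\<forall>j\<in>vel_idx L. chi1 j > 0 \<and> chi2 j > 0"
    and "\<forall>j\<in>vel_idx L. chi1 j = chi1 (1 - j) \<and> chi2 j = chi2 (1 - j)"
    and "(\<Sum>j\<in>vel_idx L. dvel vstar L * chi1 j) = 1"
    and "(\<Sum>j\<in>vel_idx L. dvel vstar L * chi2 j) = 1"
  shows "\<exists>f g :: nat \<Rightarrow> int \<Rightarrow> real.
    \<forall>i<N. \<forall>j\<in>vel_idx L.
      (f i j - fn i j) / dt
        + (flux N vstar L dx dt f i j - flux N vstar L dx dt f ((i + N - 1) mod N) j)
          / (dx * dvel vstar L)
        = chi1 j - trunc_dens vstar L (trunc_g rho g1 g2 chi2 g) i
                   * trunc_f rho g1 g2 chi1 f i j
    \<and> (g i j - gn i j) / dt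
        + (flux N vstar L dx dt g i j - flux N vstar L dx dt g ((i + N - 1) mod N) j)
          / (dx * dvel vstar L)
        = chi2 j - trunc_dens vstar L (trunc_f rho g1 g2 chi1 f) i
                   * trunc_g rho g1 g2 chi2 g i j"
proof -
  note N = assms(1) and L = assms(2) and vs = assms(3) and dx = assms(4) and dt = assms(5)
  define V where "V = vel_idx L"
  define dv where "dv = dvel vstar L"
  have dv: "dv > 0" using vs L by (simp add: dv_def dvel_def)
  have finV: "finite V" by (simp add: V_def vel_idx_def)
  have neV: "V \<noteq> {}" using L by (auto simp: V_def vel_idx_def intro!: exI[of _ 1])
  define P where "P = {..<N} \<times> V"
  define S where "S = P \<times> (UNIV :: bool set)"
  have finS: "finite S" using finV by (simp add: S_def P_def)
  have neS: "S \<noteq> {}" using neV N by (auto simp: S_def P_def lessThan_empty_iff)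
  define F where "F x = (\<lambda>i j. x ((i,j),True))" for x :: "(nat \<times> int) \<times> bool \<Rightarrow> real"
  define G where "G x = (\<lambda>i j. x ((i,j),False))" for x :: "(nat \<times> int) \<times> bool \<Rightarrow> real"
  define D where "D h i j = (flux N vstar L dx dt h i j - flux N vstar L dx dt h ((i + N - 1) mod N) j) / (dx * dvel vstar L)" for h i j
  define Qf where "Qf x i j = (F x i j - fn i j) / dt - (chi1 j - trunc_dens vstar L (trunc_g rho g1 g2 chi2 (G x)) i * trunc_f rho g1 g2 chi1 (F x) i j)" for x i j
  define Qg where "Qg x i j = (G x i j - gn i j) / dt - (chi2 j - trunc_dens vstar L (trunc_f rho g1 g2 chi1 (F x)) i * trunc_g rho g1 g2 chi2 (G x) i j)" for x i j
  define Q where "Q x s = (if snd s then Qf x (fst (fst s)) (snd (fst s)) else Qg x (fst (fst s)) (snd (fst s)))" for x s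
  define Dp where "Dp x s = (if snd s then D (F x) (fst (fst s)) (snd (fst s)) else D (G x) (fst (fst s)) (snd (fst s)))" for x s
  define \<Phi> where "\<Phi> x s = Q x s + Dp x s" for x s
  define lo1 where "lo1 j = (rho - g1) * chi1 j" for j
  define hi1 where "hi1 j = (rho + g2) * chi1 j" for j
  define lo2 where "lo2 j = inverse (rho + g2) * chi2 j" for j
  define hi2 where "hi2 j = inverse (rho - g1) * chi2 j" for j
  define Kf where "Kf = (\<Sum>k\<in>V. \<bar>dv\<bar> * (\<bar>lo1 k\<bar> + \<bar>hi1 k\<bar>))"
  define Kg where "Kg = (\<Sum>k\<in>V. \<bar>dv\<bar> * (\<bar>lo2 k\<bar> + \<bar>hi2 k\<bar>))"
  define c where "c s = (if snd s then \<bar>fn (fst (fst s)) (snd (fst s))\<bar> / dt + \<bar>chi1 (snd (fst s))\<bar> + Kg * (\<bar>lo1 (snd (fst s))\<bar> + \<bar>hi1 (snd (fst s))\<bar>)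
      else \<bar>gn (fst (fst s)) (snd (fst s))\<bar> / dt + \<bar>chi2 (snd (fst s))\<bar> + Kf * (\<bar>lo2 (snd (fst s))\<bar> + \<bar>hi2 (snd (fst s))\<bar>))" for s
  define C where "C = (\<Sum>s\<in>S. c s)"
  define R where "R = dt * C + 1"
  have Kf0: "Kf \<ge> 0" unfolding Kf_def by (intro sum_nonneg) auto
  have Kg0: "Kg \<ge> 0" unfolding Kg_def by (intro sum_nonneg) auto
  have c0: "c s \<ge> 0" for s using Kf0 Kg0 dt unfolding c_def by auto
  have C0: "C \<ge> 0" unfolding C_def using c0 by (intro sum_nonneg) auto
  have R0: "R > 0" unfolding R_def using C0 dt by (simp add: add_nonneg_pos)
  have tf: "\<bar>trunc_f rho g1 g2 chi1 h i j\<bar> \<le> \<bar>lo1 j\<bar> + \<bar>hi1 j\<bar>" for h i j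
    unfolding trunc_f_def lo1_def hi1_def by (rule trunc_abs)
  have tg: "\<bar>trunc_g rho g1 g2 chi2 h i j\<bar> \<le> \<bar>lo2 j\<bar> + \<bar>hi2 j\<bar>" for h i j
    unfolding trunc_g_def lo2_def hi2_def by (rule trunc_abs)
  have df: "\<bar>trunc_dens vstar L (trunc_f rho g1 g2 chi1 h) i\<bar> \<le> Kf" for h i
  proof -
    have "\<bar>trunc_dens vstar L (trunc_f rho g1 g2 chi1 h) i\<bar> \<le> (\<Sum>k\<in>V. \<bar>dv * trunc_f rho g1 g2 chi1 h i k\<bar>)"
      unfolding trunc_dens_def V_def dv_def by (rule sum_abs)
    also have "\<dots> \<le> Kf" unfolding Kf_def abs_mult
      by (intro sum_mono mult_left_mono tf) auto
    finally show ?thesis .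
  qed
  have dg: "\<bar>trunc_dens vstar L (trunc_g rho g1 g2 chi2 h) i\<bar> \<le> Kg" for h i
  proof -
    have "\<bar>trunc_dens vstar L (trunc_g rho g1 g2 chi2 h) i\<bar> \<le> (\<Sum>k\<in>V. \<bar>dv * trunc_g rho g1 g2 chi2 h i k\<bar>)"
      unfolding trunc_dens_def V_def dv_def by (rule sum_abs)
    also have "\<dots> \<le> Kg" unfolding Kg_def abs_mult
      by (intro sum_mono mult_left_mono tg) auto
    finally show ?thesis .
  qed
  have pw: "Q x s * x s \<ge> (x s)^2 / dt - c s * \<bar>x s\<bar>" for x s
  proof -
    obtain i j b where s: "s = ((i,j),b)" by (metis prod.collapse)
    show ?thesis
    proof (cases b)
      case True
      then have s': "s = ((i,j),True)" using s by simp
      show ?thesis unfolding s' Q_def Qf_def c_def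
        using pointwise_bound[OF dt dg[of "G x" i] tf[of "F x" i j], of "x ((i,j),True)" "fn i j" "chi1 j"]
        by (simp add: F_def)
    next
      case False
      then have s': "s = ((i,j),False)" using s by simp
      show ?thesis unfolding s' Q_def Qg_def c_def
        using pointwise_bound[OF dt df[of "F x" i] tg[of "G x" i j], of "x ((i,j),False)" "gn i j" "chi2 j"]
        by (simp add: G_def)
    qed
  qed
  have Dnn: "(\<Sum>p\<in>P. D h (fst p) (snd p) * h (fst p) (snd p)) \<ge> 0" for h
  proof -
    have "(\<Sum>p\<in>P. D h (fst p) (snd p) * h (fst p) (snd p)) = (\<Sum>i<N. \<Sum>j\<in>V. D h i j * h i j)"
      unfolding P_def by (simp add: sum.cartesian_product case_prod_beta)
    also have "\<dots> = (\<Sum>j\<in>V. \<Sum>i<N. D h i j * h i j)" by (rule sum.swap)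
    also have "\<dots> \<ge> 0" unfolding D_def
      by (intro sum_nonneg transport_nonneg N dx dt) (use dv in \<open>auto simp: dv_def\<close>)
    finally show ?thesis .
  qed
  have Dsum: "(\<Sum>s\<in>S. Dp x s * x s) \<ge> 0" for x
  proof -
    have "(\<Sum>s\<in>S. Dp x s * x s) = (\<Sum>p\<in>P. \<Sum>b\<in>UNIV. Dp x (p,b) * x (p,b))"
      unfolding S_def by (simp add: sum.cartesian_product)
    also have "\<dots> = (\<Sum>p\<in>P. D (F x) (fst p) (snd p) * F x (fst p) (snd p)) + (\<Sum>p\<in>P. D (G x) (fst p) (snd p) * G x (fst p) (snd p))"
      by (simp add: UNIV_bool Dp_def F_def G_def sum.distrib add.commute)
    finally show ?thesis using Dnn[of "F x"] Dnn[of "G x"] by simp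
  qed
  have acute: "(\<Sum>s\<in>S. \<Phi> x s * x s) > 0" if x: "(\<Sum>s\<in>S. (x s)^2) = R^2" for x
  proof -
    have xs: "\<bar>x s\<bar> \<le> R" if "s \<in> S" for s
    proof -
      have "(x s)^2 \<le> (\<Sum>s\<in>S. (x s)^2)"
        by (rule member_le_sum) (use that finS in auto)
      then have "(x s)^2 \<le> R^2" using x by simp
      then show ?thesis using R0 abs_le_square_iff[of "x s" R] by simp
    qed
    have "(\<Sum>s\<in>S. c s * \<bar>x s\<bar>) \<le> (\<Sum>s\<in>S. c s * R)"
      by (intro sum_mono mult_left_mono xs c0)
    also have "\<dots> = C * R" by (simp add: C_def sum_distrib_right)
    finally have cs: "(\<Sum>s\<in>S. c s * \<bar>x s\<bar>) \<le> C * R" .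
    have "(\<Sum>s\<in>S. (x s)^2 / dt - c s * \<bar>x s\<bar>) \<le> (\<Sum>s\<in>S. Q x s * x s)"
      by (intro sum_mono pw)
    moreover have "(\<Sum>s\<in>S. (x s)^2 / dt - c s * \<bar>x s\<bar>) = R^2 / dt - (\<Sum>s\<in>S. c s * \<bar>x s\<bar>)"
      using x by (simp add: sum_subtractf sum_divide_distrib[symmetric])
    moreover have "(\<Sum>s\<in>S. \<Phi> x s * x s) = (\<Sum>s\<in>S. Q x s * x s) + (\<Sum>s\<in>S. Dp x s * x s)"
      by (simp add: \<Phi>_def distrib_right sum.distrib)
    moreover have "R^2 / dt - C * R > 0"
    proof -
      have "R^2 / dt - C * R = R * (R - dt * C) / dt" using dt by (simp add: field_simps power2_eq_square)
      also have "\<dots> = R / dt" by (simp add: R_def)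
      finally show ?thesis using R0 dt by simp
    qed
    ultimately show ?thesis using cs Dsum[of x] by linarith
  qed
  have coord: "continuous_on UNIV (\<lambda>x::((nat \<times> int) \<times> bool) \<Rightarrow> real. x a)" for a
    by simp
  have cont: "continuous_on UNIV \<Phi>"
  proof (rule continuous_on_coordinatewise_then_product)
    fix s :: "(nat \<times> int) \<times> bool"
    obtain i j b where s: "s = ((i,j),b)" by (metis prod.collapse)
    show "continuous_on UNIV (\<lambda>x. \<Phi> x s)"
      unfolding s \<Phi>_def Q_def Dp_def Qf_def Qg_def D_def F_def G_def flux_def trunc_dens_def trunc_f_def trunc_g_def
      using dt dx dv
      by (cases b) (auto intro!: continuous_intros coord simp: dv_def)
  qed
  obtain x where x: "\<forall>s\<in>S. \<Phi> x s = 0"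
    using brouwer_acute_fin[OF finS neS cont R0 acute] by blast
  show ?thesis
  proof (rule exI[of _ "F x"], rule exI[of _ "G x"], intro allI impI ballI conjI)
    fix i j assume i: "i < N" and j: "j \<in> vel_idx L"
    have sT: "((i,j),True) \<in> S" and sF: "((i,j),False) \<in> S" using i j by (auto simp: S_def P_def V_def)
    have "Qf x i j + D (F x) i j = 0" using x sT by (auto simp: \<Phi>_def Q_def Dp_def)
    then show "(F x i j - fn i j) / dt
        + (flux N vstar L dx dt (F x) i j - flux N vstar L dx dt (F x) ((i + N - 1) mod N) j)
          / (dx * dvel vstar L)
        = chi1 j - trunc_dens vstar L (trunc_g rho g1 g2 chi2 (G x)) i
                   * trunc_f rho g1 g2 chi1 (F x) i j"
      unfolding Qf_def D_def by linarith
    have "Qg x i j + D (G x) i j = 0" using x sF by (auto simp: \<Phi>_def Q_def Dp_def)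
    then show "(G x i j - gn i j) / dt
        + (flux N vstar L dx dt (G x) i j - flux N vstar L dx dt (G x) ((i + N - 1) mod N) j)
          / (dx * dvel vstar L)
        = chi2 j - trunc_dens vstar L (trunc_f rho g1 g2 chi1 (F x)) i
                   * trunc_g rho g1 g2 chi2 (G x) i j"
      unfolding Qg_def D_def by linarith
  qed
qed

end
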